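(* Consider the multi-agent setting described in the context, with parameters $\alpha>0$ and $F\in\mathbb Z_{\ge0}$. Assume: - the set $\mathcal A$ of misbehaving agents is $F$-local; - the digraph $\mathcal D$ is $(2F+1)$-robust. Let $x_{\mathcal N}:[0,t_1)\to\mathbb R^{|\mathcal N|}$ be a trajectory of the normal agents. Then the derivatives $\frac{d}{dt}M(x_{\mathcal N}(t))$ and $\frac{d}{dt}m(x_{\mathcal N}(t))$ exist at almost all $t\in[0,t_1)$, and at almost all such $t$, $$\tfrac{d}{dt}M(x_{\mathcal N}(t))\in[-\alpha,0],\qquad \tfrac{d}{dt}m(x_{\mathcal N}(t))\in[0,\alpha].$$
   Context: Setting. Let $\mathcal D=(\mathcal V,\mathcal E)$ be a digraph with $\mathcal V=\{1,\dots,n\}$ and $n\ge2$. An edge $(i,j)\in\mathcal E$ means that agent $j$ receives information from agent $i$. The in-neighbor set of $i$ is $\mathcal V_i=\{j:(j,i)\in\mathcal E\}$, and $\mathcal J_i=\mathcal V_i\cup\{i\}$. - A nonempty $S\subset\mathcal V$ is $r$-reachable if some $i\in S$ has $|\mathcal V_i\setminus S|\ge r$. - $\mathcal D$ is $r$-robust if for every pair of nonempty disjoint subsets of $\mathcal V$, at least one of them is $r$-reachable. Dynamics and communication. Each agent has a scalar state with $\dot x_i(t)=u_i(t)$. Fix a strictly increasing $g:\mathbb R\to\mathbb R$ (not necessarily continuous). At time $t$, agent $i$ receives from each in-neighbor $j$ a value $g(x^i_j(t))$. The agents are partitioned into normal agents $\mathcal N$ and misbehaving agents $\mathcal A$. -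 A normal agent $j$ sends $g(x_j(t))$ to all its out-neighbors, so $x^i_j=x_j$, and updates via the FTRC protocol. - Misbehaving agents may use arbitrary inputs and may send arbitrary, possibly different, values to different out-neighbors. The only restriction is that $t\mapsto g(x^i_k(t))$ is Lebesgue measurable for all $k\in\mathcal A$ and $i\in\mathcal N$. - $\mathcal A$ is $F$-local if $|\mathcal V_i\cap\mathcal A|\le F$ for every $i\in\mathcal V\setminus\mathcal A$. FTRC protocol for a normal agent $i$ at time $t$: 1. Sort the received values $g(x^i_j(t))$, $j\in\mathcal V_i$. 2. If fewer than $F$ values are strictly larger than $g(x_i(t))$, remove all values strictly larger than $g(x_i(t))$; otherwise remove exactly the $F$ largest values. 3. Likewise, if fewer than $F$ values are strictly smaller than $g(x_i(t))$, remove all values strictly smaller; otherwise remove exactly the $F$ smallest values. 4. With $\mathcal R_i(t)$ the set of agents whose values were removed, set $u_i(t)=\alpha\,\mathrm{sign}\big(\sum_{j\in\mathcal J_i\setminus\mathcal R_i(t)}(g(x^i_j(t))-g(x_i(t)))\big)$, where $x^i_i=x_i$ and $\mathrm{sign}(0)=0$. Trajectories and auxiliary functions. Write $x_{\mathcal N}=(x_{\mathcal N_1},\dots,x_{\mathcal N_{|\mathcal N|}})^T$ for a fixed ordering of $\mathcal N$. A trajectory of the normal agents on an interval $I\ni0$ is an absolutely continuous $x_{\mathcal N}:I\to\mathbb R^{|\mathcal N|}$ with $\dot x_{\mathcal N_k}(t)=u_{\mathcal N_k}(t)$ for all $k$ and almost every $t\in I$, where the $u$'s are given by the FTRC protocol.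 Define $M(x)=\max_k x_k$ and $m(x)=\min_k x_k$ for $x\in\mathbb R^{|\mathcal N|}$. *)

theory Defs
  imports "HOL-Analysis.Analysis" "HOL-Library.Extended_Real"
begin

text \<open>Digraph on vertex set V with edge set E; (i,j) in E means j receives from i.\<close>

definition in_nbrs :: "(nat \<times> nat) set \<Rightarrow> nat \<Rightarrow> nat set" where
  "in_nbrs E i = {j. (j, i) \<in> E}"

definition r_reachable :: "(nat \<times> nat) set \<Rightarrow> nat set \<Rightarrow> nat \<Rightarrow> bool" where
  "r_reachable E S r \<longleftrightarrow> (\<exists>i\<in>S. card (in_nbrs E i - S) \<ge> r)"

definition r_robust :: "nat set \<Rightarrow> (nat \<times> nat) set \<Rightarrow> nat \<Rightarrow> bool" where
  "r_robust V E r \<longleftrightarrow>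
     (\<forall>S1 S2. S1 \<subseteq> V \<longrightarrow> S2 \<subseteq> V \<longrightarrow> S1 \<noteq> {} \<longrightarrow> S2 \<noteq> {} \<longrightarrow> S1 \<inter> S2 = {}
        \<longrightarrow> r_reachable E S1 r \<or> r_reachable E S2 r)"

definition F_local :: "nat set \<Rightarrow> (nat \<times> nat) set \<Rightarrow> nat set \<Rightarrow> nat \<Rightarrow> bool" where
  "F_local V E A F \<longleftrightarrow> (\<forall>i \<in> V - A. card (in_nbrs E i \<inter> A) \<le> F)"

definition abs_cont_on_interval :: "(real \<Rightarrow> real) \<Rightarrow> real \<Rightarrow> real \<Rightarrow> bool" where
  "abs_cont_on_interval f a b \<longleftrightarrow>
     (\<forall>\<epsilon>>0. \<exists>\<delta>>0. \<forall>(m::nat) (l::nat \<Rightarrow> real) (r::nat \<Rightarrow> real).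
        (\<forall>i<m. a \<le> l i \<and> l i \<le> r i \<and> r i \<le> b) \<and>
        (\<forall>i<m. \<forall>j<m. i < j \<longrightarrow> r i \<le> l j) \<and>
        (\<Sum>i<m. r i - l i) < \<delta>
        \<longrightarrow> (\<Sum>i<m. \<bar>f (r i) - f (l i)\<bar>) < \<epsilon>)"

definition abs_cont_on :: "(real \<Rightarrow> real) \<Rightarrow> real set \<Rightarrow> bool" where
  "abs_cont_on f I \<longleftrightarrow> (\<forall>a\<in>I. \<forall>b\<in>I. a \<le> b \<longrightarrow> abs_cont_on_interval f a b)"

definition recv :: "nat set \<Rightarrow> (real \<Rightarrow> nat \<Rightarrow> real) \<Rightarrow> (nat \<Rightarrow> nat \<Rightarrow> real \<Rightarrow> real)
    \<Rightarrow> nat \<Rightarrow> nat \<Rightarrow> real \<Rightarrow> real" where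
  "recv N x y i j t = (if j \<in> N then x t j else y i j t)"

text \<open>R is an admissible set of removed agents for normal agent i at time t
  under the FTRC rule (ties among equal values may be broken arbitrarily).\<close>
definition FTRC_removed ::
  "(real \<Rightarrow> real) \<Rightarrow> nat \<Rightarrow> (nat \<times> nat) set \<Rightarrow> nat set \<Rightarrow> (real \<Rightarrow> nat \<Rightarrow> real)
    \<Rightarrow> (nat \<Rightarrow> nat \<Rightarrow> real \<Rightarrow> real) \<Rightarrow> nat \<Rightarrow> real \<Rightarrow> nat set \<Rightarrow> bool" where
  "FTRC_removed g F E N x y i t R \<longleftrightarrow>
    (let Vi = in_nbrs E i;
         v = (\<lambda>j. g (recv N x y i j t));
         own = g (x t i);
         Lg = {j\<in>Vi. v j > own};
         Sm = {j\<in>Vi. v j < own}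
     in \<exists>RL RS. R = RL \<union> RS \<and> RL \<subseteq> Vi \<and> RS \<subseteq> Vi \<and>
          (if card Lg < F then RL = Lg
           else card RL = F \<and> (\<forall>a\<in>RL. \<forall>b\<in>Vi - RL. v b \<le> v a)) \<and>
          (if card Sm < F then RS = Sm
           else card RS = F \<and> (\<forall>a\<in>RS. \<forall>b\<in>Vi - RS. v a \<le> v b)))"

definition FTRC_input ::
  "real \<Rightarrow> (real \<Rightarrow> real) \<Rightarrow> (nat \<times> nat) set \<Rightarrow> nat set \<Rightarrow> (real \<Rightarrow> nat \<Rightarrow> real)
    \<Rightarrow> (nat \<Rightarrow> nat \<Rightarrow> real \<Rightarrow> real) \<Rightarrow> nat \<Rightarrow> real \<Rightarrow> nat set \<Rightarrow> real" where
  "FTRC_input \<alpha> g E N x y i t R =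
     \<alpha> * sgn (\<Sum>j \<in> (in_nbrs E i \<union> {i}) - R. g (recv N x y i j t) - g (x t i))"

end

theory Submission
  imports Defs
begin

lemma countable_isolated:
  fixes S :: "real set"
  assumes "\<And>t. t\<in>S \<Longrightarrow> \<exists>e>0. \<forall>s\<in>S. s \<noteq> t \<longrightarrow> e \<le> \<bar>s - t\<bar>"
  shows "countable S"
proof -
  obtain e where e: "\<And>t. t\<in>S \<Longrightarrow> e t > 0 \<and> (\<forall>s\<in>S. s\<noteq>t \<longrightarrow> e t \<le> \<bar>s-t\<bar>)"
    using assms by metis
  have "\<exists>q\<in>\<rat>. t < q \<and> q < t + e t/2" if "t\<in>S" for t
    using Rats_dense_in_real[of t "t + e t/2"] e[OF that] by auto
  then obtain q where q: "\<And>t. t\<in>S \<Longrightarrow> q t \<in> \<rat> \<and> t < q t \<and> q t < t + e t / 2"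
    by metis
  have "inj_on q S"
  proof (rule inj_onI)
    fix a b assume ab: "a\<in>S" "b\<in>S" "q a = q b"
    show "a = b"
    proof (rule ccontr)
      assume "a\<noteq>b"
      then have ea: "e a \<le> \<bar>b-a\<bar>" and eb: "e b \<le> \<bar>a - b\<bar>" using e ab by auto
      have qa: "a < q a" "q a < a + e a / 2" using q[OF ab(1)] by auto
      have qb: "b < q b" "q b < b + e b / 2" using q[OF ab(2)] by auto
      have pa: "e a > 0" using e[OF ab(1)] by auto
      have pb: "e b > 0" using e[OF ab(2)] by auto
      show False
      proof (cases "a \<le> b")
        case True then have "e a \<le> b - a" using ea by simp
        then show False using qa qb ab(3) pa by linarith
      next
        case False then have "e b \<le> a - b" using eb by simp
        then show False using qa qb ab(3) pb by linarith
      qed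
    qed
  qed
  moreover have "countable (q ` S)" using countable_rat q
    by (meson countable_subset image_subsetI)
  ultimately show ?thesis using countable_image_inj_on by blast
qed

lemma deriv_isolated_zero:
  fixes h :: "real \<Rightarrow> real"
  assumes "(h has_real_derivative d) (at t)" "d \<noteq> 0" "h t = 0"
  shows "\<exists>e>0. \<forall>s. s \<noteq> t \<and> \<bar>s - t\<bar> < e \<longrightarrow> h s \<noteq> 0"
proof -
  have "((\<lambda>s. (h s - h t)/(s - t)) \<longlongrightarrow> d) (at t)"
    using assms(1) has_field_derivative_iff by blast
  then have "eventually (\<lambda>s. (h s - h t)/(s-t) \<noteq> 0) (at t)"
    using assms(2) tendsto_imp_eventually_ne by blast
  then obtain e where "e>0" "\<forall>s. s\<noteq>t \<and> dist s t < e \<longrightarrow> (h s - h t)/(s-t) \<noteq> 0"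
    by (auto simp: eventually_at)
  then show ?thesis using assms(3) by (auto simp: dist_real_def)
qed

lemma deriv_abs_zero:
  fixes h :: "real \<Rightarrow> real"
  assumes "(h has_real_derivative 0) (at t)" "h t = 0"
  shows "((\<lambda>s. \<bar>h s\<bar>) has_real_derivative 0) (at t)"
proof -
  have q: "((\<lambda>s. (h s - h t)/(s - t)) \<longlongrightarrow> 0) (at t)"
    using assms(1) unfolding has_field_derivative_iff .
  have q1: "((\<lambda>s. \<bar>(h s - h t)/(s - t)\<bar>) \<longlongrightarrow> 0) (at t)"
    by (rule tendsto_rabs_zero[OF q])
  have eq: "(\<lambda>s. \<bar>(\<bar>h s\<bar> - \<bar>h t\<bar>)/(s - t)\<bar>) = (\<lambda>s. \<bar>(h s - h t)/(s - t)\<bar>)"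
    using assms(2) by (simp add: abs_divide)
  have q2: "((\<lambda>s. \<bar>(\<bar>h s\<bar> - \<bar>h t\<bar>)/(s - t)\<bar>) \<longlongrightarrow> 0) (at t)"
    unfolding eq by (rule q1)
  show ?thesis unfolding has_field_derivative_iff by (rule tendsto_rabs_zero_cancel[OF q2])
qed

lemma deriv_max_eq:
  fixes f g :: "real \<Rightarrow> real"
  assumes "(f has_real_derivative D) (at t)" "(g has_real_derivative D) (at t)" "f t = g t"
  shows "((\<lambda>s. max (f s) (g s)) has_real_derivative D) (at t)"
proof -
  have h: "((\<lambda>s. f s - g s) has_real_derivative 0) (at t)"
    using DERIV_diff[OF assms(1,2)] by simp
  have "((\<lambda>s. \<bar>f s - g s\<bar>) has_real_derivative 0) (at t)"
    using deriv_abs_zero[OF h] assms(3) by simp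
  then have "((\<lambda>s. (f s + g s + \<bar>f s - g s\<bar>) / 2) has_real_derivative (D + D + 0) / 2) (at t)"
    by (intro DERIV_cdivide DERIV_add assms)
  moreover have "(\<lambda>s. max (f s) (g s)) = (\<lambda>s. (f s + g s + \<bar>f s - g s\<bar>) / 2)"
    by (auto simp: max_def fun_eq_iff)
  ultimately show ?thesis by simp
qed

lemma deriv_max_gt:
  fixes f g :: "real \<Rightarrow> real"
  assumes "(f has_real_derivative a) (at t)" "(g has_real_derivative b) (at t)" "f t > g t"
  shows "((\<lambda>s. max (f s) (g s)) has_real_derivative a) (at t)"
proof -
  have "isCont (\<lambda>s. f s - g s) t"
    using DERIV_isCont[OF assms(1)] DERIV_isCont[OF assms(2)] by (intro continuous_intros)
  then have "((\<lambda>s. f s - g s) \<longlongrightarrow> f t - g t) (at t)" by (simp add: isCont_def)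
  then have "eventually (\<lambda>s. 0 < f s - g s) (at t)"
    using assms(3) order_tendstoD(1) by (metis diff_gt_0_iff_gt)
  then have "eventually (\<lambda>s. 0 < f s - g s) (nhds t)"
    using assms(3) eventually_nhds_conv_at by auto
  then have ev: "eventually (\<lambda>s. max (f s) (g s) = f s) (nhds t)"
    by (rule eventually_mono) auto
  show ?thesis using DERIV_cong_ev[OF refl ev refl] assms(1) by simp
qed

lemma Max_deriv:
  fixes f :: "nat \<Rightarrow> real \<Rightarrow> real"
  assumes "finite S" "S \<noteq> {}" "\<And>k. k\<in>S \<Longrightarrow> (f k has_real_derivative d k) (at t)"
    "\<And>i j. i\<in>S \<Longrightarrow> j\<in>S \<Longrightarrow> f i t = f j t \<Longrightarrow> d i = d j"
  shows "\<exists>k\<in>S. Max ((\<lambda>k. f k t) ` S) = f k t \<and>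
           ((\<lambda>s. Max ((\<lambda>k. f k s) ` S)) has_real_derivative d k) (at t)"
  using assms(1,2,3,4)
proof (induction S rule: finite_ne_induct)
  case (singleton x)
  have "(f x has_real_derivative d x) (at t)" using singleton.prems(1) by blast
  then show ?case by simp
next
  case (insert j S)
  have p1: "(f k has_real_derivative d k) (at t)" if "k\<in>S" for k
    using insert.prems(1) that by blast
  have p2: "d i = d j" if "i\<in>S" "j\<in>S" "f i t = f j t" for i j
    using insert.prems(2) that by blast
  from insert.IH[OF p1 p2] obtain k where k: "k\<in>S" "Max ((\<lambda>k. f k t) ` S) = f k t"
    "((\<lambda>s. Max ((\<lambda>k. f k s) ` S)) has_real_derivative d k) (at t)" by blast
  have eq: "\<And>s. Max ((\<lambda>k. f k s) ` insert j S) = max (f j s) (Max ((\<lambda>k. f k s) ` S))"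
    using insert.hyps by simp
  have dj: "(f j has_real_derivative d j) (at t)" using insert.prems(1) by blast
  consider "f j t > f k t" | "f j t < f k t" | "f j t = f k t" by linarith
  then show ?case
  proof cases
    case 1
    then show ?thesis unfolding eq using deriv_max_gt[OF dj k(3)] k(2)
      by (intro bexI[of _ j]) auto
  next
    case 2
    have "((\<lambda>s. max (Max ((\<lambda>k. f k s) ` S)) (f j s)) has_real_derivative d k) (at t)"
      using deriv_max_gt[OF k(3) dj] k(2) 2 by simp
    then show ?thesis unfolding eq using k 2
      by (intro bexI[of _ k]) (auto simp: max.commute)
  next
    case 3
    have "d j = d k" using insert.prems(2)[of j k] 3 k(1) by blast
    then show ?thesis unfolding eq using deriv_max_eq[OF dj _] k 3
      by (intro bexI[of _ k]) auto
  qed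
qed

lemma Min_neg_Max:
  fixes f :: "nat \<Rightarrow> real"
  assumes "finite S" "S \<noteq> {}"
  shows "Min (f ` S) = - Max ((\<lambda>k. - f k) ` S)"
  using assms
proof (induction S rule: finite_ne_induct)
  case (singleton x) then show ?case by simp
next
  case (insert x F)
  have h1: "Min (f ` insert x F) = min (f x) (Min (f ` F))"
    using insert by (subst image_insert, subst Min_insert) auto
  have h2: "Max ((\<lambda>k. - f k) ` insert x F) = max (- f x) (Max ((\<lambda>k. - f k) ` F))"
    using insert by (subst image_insert, subst Max_insert) auto
  have mm: "\<And>a m::real. min a (- m) = - max (- a) m" by (auto simp: min_def max_def)
  show ?case by (simp only: h1 h2 insert.IH mm)
qed

lemma FTRC_sign:
  assumes fin: "finite (in_nbrs E k)"
    and kN: "k \<in> N"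
    and nb: "in_nbrs E k \<subseteq> N \<union> A"
    and cardA: "card (in_nbrs E k \<inter> A) \<le> F"
    and gm: "strict_mono g" and ap: "\<alpha> > 0"
    and rem: "FTRC_removed g F E N x y k t R"
  shows "(\<forall>j\<in>N. x t j \<le> x t k) \<Longrightarrow> -\<alpha> \<le> FTRC_input \<alpha> g E N x y k t R \<and> FTRC_input \<alpha> g E N x y k t R \<le> 0"
    and "(\<forall>j\<in>N. x t k \<le> x t j) \<Longrightarrow> 0 \<le> FTRC_input \<alpha> g E N x y k t R \<and> FTRC_input \<alpha> g E N x y k t R \<le> \<alpha>"
proof -
  define v where "v = (\<lambda>j. g (recv N x y k j t))"
  define own where "own = g (x t k)"
  define Lg where "Lg = {j\<in>in_nbrs E k. v j > own}"
  define Sm where "Sm = {j\<in>in_nbrs E k. v j < own}"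
  from rem obtain RL RS where R: "R = RL \<union> RS" "RL \<subseteq> in_nbrs E k" "RS \<subseteq> in_nbrs E k"
    and RLc: "if card Lg < F then RL = Lg
           else card RL = F \<and> (\<forall>a\<in>RL. \<forall>b\<in>in_nbrs E k - RL. v b \<le> v a)"
    and RSc: "if card Sm < F then RS = Sm
           else card RS = F \<and> (\<forall>a\<in>RS. \<forall>b\<in>in_nbrs E k - RS. v a \<le> v b)"
    unfolding FTRC_removed_def Let_def Lg_def Sm_def v_def own_def by blast
  have vN: "v j = g (x t j)" if "j \<in> N" for j using that by (simp add: v_def recv_def)
  have vk: "v k = own" using kN by (simp add: v_def recv_def own_def)
  have cA: "card S \<le> F" if "S \<subseteq> in_nbrs E k \<inter> A" for S
    using card_mono[OF _ that] fin cardA by (meson finite_Int le_trans)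
  show "-\<alpha> \<le> FTRC_input \<alpha> g E N x y k t R \<and> FTRC_input \<alpha> g E N x y k t R \<le> 0"
    if top: "\<forall>j\<in>N. x t j \<le> x t k"
  proof -
    have LgA: "Lg \<subseteq> in_nbrs E k \<inter> A"
    proof
      fix j assume j: "j \<in> Lg"
      hence jV: "j\<in>in_nbrs E k" and jg: "v j > own" by (auto simp: Lg_def)
      show "j \<in> in_nbrs E k \<inter> A"
      proof (cases "j\<in>N")
        case True
        have "g (x t j) \<le> g (x t k)" using top True gm by (simp add: strict_mono_less_eq)
        then show ?thesis using jg own_def vN[OF True] by simp
      next
        case False then show ?thesis using nb jV by auto
      qed
    qed
    have finLg: "finite Lg" using fin Lg_def by simp
    have cLg: "card Lg \<le> F" using cA[OF LgA] .
    have LgRL: "Lg \<subseteq> RL"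
    proof (cases "card Lg < F")
      case True then show ?thesis using RLc by simp
    next
      case False
      then have c: "card RL = F" and ord: "\<forall>a\<in>RL. \<forall>b\<in>in_nbrs E k - RL. v b \<le> v a" using RLc by auto
      show ?thesis
      proof
        fix b assume b: "b \<in> Lg"
        show "b \<in> RL"
        proof (rule ccontr)
          assume nbR: "b \<notin> RL"
          have "RL \<subseteq> Lg"
          proof
            fix a assume "a\<in>RL"
            then have "v b \<le> v a" using ord b nbR Lg_def by auto
            then show "a \<in> Lg" using \<open>a\<in>RL\<close> R(2) b Lg_def by auto
          qed
          then have "RL = Lg" using card_subset_eq[OF finLg] c cLg False by auto
          then show False using b nbR by simp
        qed
      qed
    qed
    have "(\<Sum>j \<in> (in_nbrs E k \<union> {k}) - R. g (recv N x y k j t) - g (x t k)) \<le> 0"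
    proof (rule sum_nonpos)
      fix j assume j: "j \<in> (in_nbrs E k \<union> {k}) - R"
      show "g (recv N x y k j t) - g (x t k) \<le> 0"
      proof (cases "j = k")
        case True then show ?thesis using kN by (simp add: recv_def)
      next
        case False
        then have "j\<in>in_nbrs E k" "j \<notin> Lg" using j R LgRL by auto
        then show ?thesis by (auto simp: Lg_def v_def own_def)
      qed
    qed
    then show ?thesis using ap unfolding FTRC_input_def by (auto simp: sgn_if)
  qed
  show "0 \<le> FTRC_input \<alpha> g E N x y k t R \<and> FTRC_input \<alpha> g E N x y k t R \<le> \<alpha>"
    if bot: "\<forall>j\<in>N. x t k \<le> x t j"
  proof -
    have SmA: "Sm \<subseteq> in_nbrs E k \<inter> A"
    proof
      fix j assume j: "j \<in> Sm"
      hence jV: "j\<in>in_nbrs E k" and jg: "v j < own" by (auto simp: Sm_def)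
      show "j \<in> in_nbrs E k \<inter> A"
      proof (cases "j\<in>N")
        case True
        have "g (x t k) \<le> g (x t j)" using bot True gm by (simp add: strict_mono_less_eq)
        then show ?thesis using jg own_def vN[OF True] by simp
      next
        case False then show ?thesis using nb jV by auto
      qed
    qed
    have finSm: "finite Sm" using fin Sm_def by simp
    have cSm: "card Sm \<le> F" using cA[OF SmA] .
    have SmRS: "Sm \<subseteq> RS"
    proof (cases "card Sm < F")
      case True then show ?thesis using RSc by simp
    next
      case False
      then have c: "card RS = F" and ord: "\<forall>a\<in>RS. \<forall>b\<in>in_nbrs E k - RS. v a \<le> v b" using RSc by auto
      show ?thesis
      proof
        fix b assume b: "b \<in> Sm"
        show "b \<in> RS"
        proof (rule ccontr)
          assume nbR: "b \<notin> RS"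
          have "RS \<subseteq> Sm"
          proof
            fix a assume "a\<in>RS"
            then have "v a \<le> v b" using ord b nbR Sm_def by auto
            then show "a \<in> Sm" using \<open>a\<in>RS\<close> R(3) b Sm_def by auto
          qed
          then have "RS = Sm" using card_subset_eq[OF finSm] c cSm False by auto
          then show False using b nbR by simp
        qed
      qed
    qed
    have "(\<Sum>j \<in> (in_nbrs E k \<union> {k}) - R. g (recv N x y k j t) - g (x t k)) \<ge> 0"
    proof (rule sum_nonneg)
      fix j assume j: "j \<in> (in_nbrs E k \<union> {k}) - R"
      show "g (recv N x y k j t) - g (x t k) \<ge> 0"
      proof (cases "j = k")
        case True then show ?thesis using kN by (simp add: recv_def)
      next
        case False
        then have "j\<in>in_nbrs E k" "j \<notin> Sm" using j R SmRS by auto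
        then show ?thesis by (auto simp: Sm_def v_def own_def)
      qed
    qed
    then show ?thesis using ap unfolding FTRC_input_def by (auto simp: sgn_if)
  qed
qed

lemma pointwise:
  fixes F :: nat and E :: "(nat \<times> nat) set" and N A :: "nat set"
    and \<alpha> :: real and g :: "real \<Rightarrow> real"
    and x :: "real \<Rightarrow> nat \<Rightarrow> real"
    and y :: "nat \<Rightarrow> nat \<Rightarrow> real \<Rightarrow> real" and R :: "nat \<Rightarrow> nat set"
  assumes finN: "finite N" and finNb: "\<And>k. finite (in_nbrs E k)"
    and nbNA: "\<And>k. in_nbrs E k \<subseteq> N \<union> A"
    and cardA: "\<And>k. k\<in>N \<Longrightarrow> card (in_nbrs E k \<inter> A) \<le> F"
    and g_mono: "strict_mono g" and alpha_pos: "\<alpha> > 0"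
    and R: "\<And>k. k\<in>N \<Longrightarrow> FTRC_removed g F E N x y k t (R k) \<and>
          ((\<lambda>s. x s k) has_real_derivative FTRC_input \<alpha> g E N x y k t (R k)) (at t)"
    and pair0: "\<And>i j a b. i\<in>N \<Longrightarrow> j\<in>N \<Longrightarrow> x t i = x t j \<Longrightarrow>
         ((\<lambda>s. x s i) has_real_derivative a) (at t) \<Longrightarrow> ((\<lambda>s. x s j) has_real_derivative b) (at t) \<Longrightarrow> a = b"
  shows "(\<exists>D. ((\<lambda>s. Max ((\<lambda>k. x s k) ` N)) has_real_derivative D) (at t) \<and> - \<alpha> \<le> D \<and> D \<le> 0) \<and>
        (\<exists>D. ((\<lambda>s. Min ((\<lambda>k. x s k) ` N)) has_real_derivative D) (at t) \<and> 0 \<le> D \<and> D \<le> \<alpha>)"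
proof -
  define d where "d k = FTRC_input \<alpha> g E N x y k t (R k)" for k
  have dd: "\<And>k. k\<in>N \<Longrightarrow> ((\<lambda>s. x s k) has_real_derivative d k) (at t)" using R unfolding d_def by blast
  have pair: "d i = d j" if ij: "i\<in>N" "j\<in>N" "x t i = x t j" for i j
    using pair0[OF ij dd[OF ij(1)] dd[OF ij(2)]] .
  show ?thesis
  proof (cases "N = {}")
    case True
    have e1: "(\<lambda>s. Max ((\<lambda>k. x s k) ` N)) = (\<lambda>s. Max {})" using True by simp
    have e2: "(\<lambda>s. Min ((\<lambda>k. x s k) ` N)) = (\<lambda>s. Min {})" using True by simp
    have c1: "((\<lambda>s. Max {}::real) has_real_derivative 0) (at t)" by (rule DERIV_const)
    have c2: "((\<lambda>s. Min {}::real) has_real_derivative 0) (at t)" by (rule DERIV_const)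
    have a0: "- \<alpha> \<le> 0" "0 \<le> \<alpha>" using alpha_pos by auto
    show ?thesis unfolding e1 e2
      by (intro conjI exI[of _ 0] c1 c2 a0 order_refl)
  next
    case False
    obtain k where k: "k\<in>N" "Max ((\<lambda>k. x t k) ` N) = x t k"
        "((\<lambda>s. Max ((\<lambda>k. x s k) ` N)) has_real_derivative d k) (at t)"
      using Max_deriv[of N "\<lambda>k s. x s k" d t, OF finN False dd pair] by blast
    have top: "\<forall>j\<in>N. x t j \<le> x t k"
    proof
      fix j assume "j\<in>N"
      then have "x t j \<le> Max ((\<lambda>k. x t k) ` N)" using finN by (intro Max_ge) auto
      then show "x t j \<le> x t k" using k(2) by simp
    qed
    have s1: "-\<alpha> \<le> d k \<and> d k \<le> 0"
      using FTRC_sign(1)[OF finNb[of k] k(1) nbNA[of k] cardA[OF k(1)] g_mono alpha_pos conjunct1[OF R[OF k(1)]] top] R[OF k(1)] d_def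
      by auto
    obtain k' where k': "k'\<in>N" "Max ((\<lambda>k. - x t k) ` N) = - x t k'"
        "((\<lambda>s. Max ((\<lambda>k. - x s k) ` N)) has_real_derivative - d k') (at t)"
    proof -
      have ddn: "((\<lambda>s. - x s k) has_real_derivative - d k) (at t)" if "k \<in> N" for k
        using DERIV_minus[OF dd[OF that]] .
      have pn: "- d i = - d j" if "i\<in>N" "j\<in>N" "- x t i = - x t j" for i j
        using pair[of i j] that by simp
      show ?thesis using Max_deriv[of N "\<lambda>k s. - x s k" "\<lambda>k. - d k" t, OF finN False ddn pn] that
        by blast
    qed
    have bot: "\<forall>j\<in>N. x t k' \<le> x t j"
    proof
      fix j assume "j\<in>N"
      then have "- x t j \<le> Max ((\<lambda>k. - x t k) ` N)" using finN by (intro Max_ge) auto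
      then show "x t k' \<le> x t j" using k'(2) by simp
    qed
    have s2: "0 \<le> d k' \<and> d k' \<le> \<alpha>"
      using FTRC_sign(2)[OF finNb[of k'] k'(1) nbNA[of k'] cardA[OF k'(1)] g_mono alpha_pos conjunct1[OF R[OF k'(1)]] bot] R[OF k'(1)] d_def
      by auto
    have mineq: "(\<lambda>s. Min ((\<lambda>k. x s k) ` N)) = (\<lambda>s. - Max ((\<lambda>k. - x s k) ` N))"
      by (rule ext) (rule Min_neg_Max[OF finN False])
    have "((\<lambda>s. Min ((\<lambda>k. x s k) ` N)) has_real_derivative d k') (at t)"
      unfolding mineq using DERIV_minus[OF k'(3)] by simp
    then show ?thesis using k(3) s1 s2 by blast
  qed
qed

theorem theorem3:
  fixes n F :: nat and E :: "(nat \<times> nat) set" and N A :: "nat set"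
    and \<alpha> :: real and g :: "real \<Rightarrow> real" and t1 :: ereal
    and x :: "real \<Rightarrow> nat \<Rightarrow> real"
    and y :: "nat \<Rightarrow> nat \<Rightarrow> real \<Rightarrow> real"
  defines "V \<equiv> {1..n}"
  defines "I \<equiv> {t::real. 0 \<le> t \<and> ereal t < t1}"
  assumes n2: "n \<ge> 2"
    and E_sub: "E \<subseteq> V \<times> V"
    and no_loops: "\<forall>i. (i, i) \<notin> E"
    and partition: "N \<union> A = V" "N \<inter> A = {}"
    and g_mono: "strict_mono g"
    and alpha_pos: "\<alpha> > 0"
    and meas: "\<forall>k\<in>A. \<forall>i\<in>N. (\<lambda>t. g (y i k t)) \<in> borel_measurable (lebesgue_on I)"
    and Flocal: "F_local V E A F"
    and robust: "r_robust V E (2 * F + 1)"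
    and absc: "\<forall>k\<in>N. abs_cont_on (\<lambda>t. x t k) I"
    and traj: "AE t in lebesgue. t \<in> I \<longrightarrow>
        (\<forall>k\<in>N. \<exists>R. FTRC_removed g F E N x y k t R \<and>
             ((\<lambda>s. x s k) has_real_derivative FTRC_input \<alpha> g E N x y k t R) (at t))"
  shows "AE t in lebesgue. t \<in> I \<longrightarrow>
      (\<exists>D. ((\<lambda>s. Max ((\<lambda>k. x s k) ` N)) has_real_derivative D) (at t) \<and> - \<alpha> \<le> D \<and> D \<le> 0) \<and>
      (\<exists>D. ((\<lambda>s. Min ((\<lambda>k. x s k) ` N)) has_real_derivative D) (at t) \<and> 0 \<le> D \<and> D \<le> \<alpha>)"
  proof -
  have finV: "finite V" by (simp add: V_def)
  have NV: "N \<subseteq> V" using partition by auto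
  have finN: "finite N" using finV NV finite_subset by blast
  have nbV: "\<And>k. in_nbrs E k \<subseteq> V" using E_sub by (auto simp: in_nbrs_def)
  have finNb: "\<And>k. finite (in_nbrs E k)" using nbV finV finite_subset by blast
  have nbNA: "\<And>k. in_nbrs E k \<subseteq> N \<union> A" using nbV partition(1) by auto
  have cardA: "\<And>k. k\<in>N \<Longrightarrow> card (in_nbrs E k \<inter> A) \<le> F"
    using Flocal partition NV by (auto simp: F_local_def)
  define Bp where "Bp i j = {t. x t i = x t j \<and> (\<exists>a b. ((\<lambda>s. x s i) has_real_derivative a) (at t)
      \<and> ((\<lambda>s. x s j) has_real_derivative b) (at t) \<and> a \<noteq> b)}" for i j
  have cBp: "countable (Bp i j)" for i j
  proof (rule countable_isolated)
    fix t assume "t \<in> Bp i j"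
    then obtain a b where ab: "x t i = x t j" "((\<lambda>s. x s i) has_real_derivative a) (at t)"
      "((\<lambda>s. x s j) has_real_derivative b) (at t)" "a \<noteq> b" by (auto simp: Bp_def)
    have "((\<lambda>s. x s i - x s j) has_real_derivative a - b) (at t)" using DERIV_diff[OF ab(2,3)] .
    then obtain e where e: "e>0" "\<forall>s. s \<noteq> t \<and> \<bar>s - t\<bar> < e \<longrightarrow> x s i - x s j \<noteq> 0"
      using deriv_isolated_zero[of "\<lambda>s. x s i - x s j" "a-b" t] ab by auto
    show "\<exists>e>0. \<forall>s\<in>Bp i j. s \<noteq> t \<longrightarrow> e \<le> \<bar>s - t\<bar>"
    proof (intro exI[of _ e] conjI ballI impI)
      fix s assume "s \<in> Bp i j" "s \<noteq> t"
      then show "e \<le> \<bar>s - t\<bar>" using e by (force simp: Bp_def)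
    qed (use e in auto)
  qed
  define B where "B = (\<Union>i\<in>N. \<Union>j\<in>N. Bp i j)"
  have "countable B" unfolding B_def
    by (intro countable_UN[OF countable_finite[OF finN]] cBp)
  then have "B \<in> null_sets lebesgue" using null_sets_completionI countable_imp_null_set_lborel by blast
  then have aeB: "AE t in lebesgue. t \<notin> B" by (rule AE_not_in)
  show ?thesis
  proof (rule eventually_elim2[OF traj aeB], goal_cases)
    case (1 t)
    note elim = 1
    show ?case
    proof
      assume tI: "t \<in> I"
      have ex: "\<forall>k\<in>N. \<exists>R. FTRC_removed g F E N x y k t R \<and>
          ((\<lambda>s. x s k) has_real_derivative FTRC_input \<alpha> g E N x y k t R) (at t)"
        using elim(1) tI by (rule mp)
      from bchoice[OF ex] obtain R where R': "\<forall>k\<in>N. FTRC_removed g F E N x y k t (R k) \<and>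
          ((\<lambda>s. x s k) has_real_derivative FTRC_input \<alpha> g E N x y k t (R k)) (at t)"
        by (elim exE)
      have R: "FTRC_removed g F E N x y k t (R k) \<and>
          ((\<lambda>s. x s k) has_real_derivative FTRC_input \<alpha> g E N x y k t (R k)) (at t)" if "k\<in>N" for k
        using R' that by (rule bspec)
      show "(\<exists>D. ((\<lambda>s. Max ((\<lambda>k. x s k) ` N)) has_real_derivative D) (at t) \<and> - \<alpha> \<le> D \<and> D \<le> 0) \<and>
        (\<exists>D. ((\<lambda>s. Min ((\<lambda>k. x s k) ` N)) has_real_derivative D) (at t) \<and> 0 \<le> D \<and> D \<le> \<alpha>)"
      proof (rule pointwise[OF finN finNb nbNA cardA g_mono alpha_pos R])
        fix i j a b assume ij: "i\<in>N" "j\<in>N" "x t i = x t j"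
          and da: "((\<lambda>s. x s i) has_real_derivative a) (at t)"
          and db: "((\<lambda>s. x s j) has_real_derivative b) (at t)"
        show "a = b"
        proof (rule ccontr)
          assume "a \<noteq> b"
          then have "t \<in> Bp i j" unfolding Bp_def using da db ij(3) by blast
          then show False using elim(2) ij unfolding B_def by blast
        qed
      qed
    qed
  qed
qed

end
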